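(* Let $\omega$ be a normalized 3-cocycle on a finite group $G$ with values in $\mathbb{K}^\times$ (i.e. $\omega(x,y,z)\omega(w,xy,z)\omega(w,x,y)=\omega(w,x,yz)\omega(wx,y,z)$ and $\omega(x,y,z)=1$ if one of $x,y,z$ is $e$). For $g,h,x,y\in G$ define $$\gamma_{g,h}(x)=\frac{\omega(g,h,x)\,\omega(ghxh^{-1}g^{-1},g,h)}{\omega(g,hxh^{-1},h)},\qquad \mu_g(x,y)=\frac{\omega(gxg^{-1},g,y)}{\omega(gxg^{-1},gyg^{-1},g)\,\omega(g,x,y)}.$$ Then $(\omega,\gamma,\mu,1)$ is a quasi-abelian 3-cocycle on the crossed module $(G,G,\mathrm{id}_G)$, where $G$ acts on itself by conjugation ${}^gx=gxg^{-1}$.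
   Context: $\mathbb{K}$ is an algebraically closed field of characteristic $0$. For a finite crossed module $(G,X,\partial)$ ($G$ acting on $X$ by automorphisms $(g,x)\mapsto{}^gx$, $\partial:X\to G$ a homomorphism with ${}^{\partial(x)}x'=xx'x^{-1}$, $\partial({}^gx)=g\partial(x)g^{-1}$), a quasi-abelian 3-cocycle is a quadruple $(\omega,\gamma,\mu,c)$ of functions $\omega:X^3\to\mathbb{K}^\times$, $(g,h,x)\mapsto\gamma_{g,h}(x)$ on $G\times G\times X$, $(g,x,y)\mapsto\mu_g(x,y)$ on $G\times X\times X$, $c:X^2\to\mathbb{K}^\times$, such that for all $g,h,k\in G$, $w,x,y,z\in X$: (a) $\omega(x,y,z)\omega(w,xy,z)\omega(w,x,y)=\omega(w,x,yz)\omega(wx,y,z)$; (b) $\gamma_{h,k}(x)\gamma_{g,hk}(x)=\gamma_{gh,k}(x)\gamma_{g,h}({}^kx)$; (c) $\frac{\mu_g(y,z)\mu_g(x,yz)}{\mu_g(xy,z)\mu_g(x,y)}=\frac{\omega({}^gx,{}^gy,{}^gz)}{\omega(x,y,z)}$; (d) $\frac{\gamma_{g,h}(x)\gamma_{g,h}(y)}{\gamma_{g,h}(xy)}=\frac{\mu_g({}^hx,{}^hy)\mu_h(x,y)}{\mu_{gh}(x,y)}$; (e) $\frac{c({}^gx,{}^gy)}{c(x,y)}=\frac{\mu_g(xyx^{-1},x)}{\mu_g(x,y)}\cdot\frac{\gamma_{g\partial(x)g^{-1},g}(y)}{\gamma_{g,\partial(x)}(y)}$; (f) $c(xy,z)=\frac{\omega(x,y,z)\,\omega((xy)z(xy)^{-1},x,y)}{\omega(x,yzy^{-1},y)\,\gamma_{\partial(x),\partial(y)}(z)}\,c(x,yzy^{-1})\,c(y,z)$;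 (g) $c(x,yz)=\frac{\omega(xyx^{-1},x,z)}{\omega(x,y,z)\,\omega(xyx^{-1},xzx^{-1},x)\,\mu_{\partial(x)}(y,z)}\,c(x,y)\,c(x,z)$. Here $1$ denotes the constant function $c\equiv1$. *)

theory Defs
  imports "HOL-Algebra.Group" "HOL-Computational_Algebra.Polynomial"
begin

definition alg_closed :: "'k::field itself \<Rightarrow> bool" where
  "alg_closed _ \<longleftrightarrow> (\<forall>p::'k poly. degree p > 0 \<longrightarrow> (\<exists>x. poly p x = 0))"

definition normalized_3cocycle :: "('g,'a) monoid_scheme \<Rightarrow> ('g \<Rightarrow> 'g \<Rightarrow> 'g \<Rightarrow> 'k::field) \<Rightarrow> bool" where
  "normalized_3cocycle G \<omega> \<longleftrightarrow>
     (\<forall>x\<in>carrier G. \<forall>y\<in>carrier G. \<forall>z\<in>carrier G. \<omega> x y z \<noteq> 0) \<and>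
     (\<forall>w\<in>carrier G. \<forall>x\<in>carrier G. \<forall>y\<in>carrier G. \<forall>z\<in>carrier G.
        \<omega> x y z * \<omega> w (x \<otimes>\<^bsub>G\<^esub> y) z * \<omega> w x y
        = \<omega> w x (y \<otimes>\<^bsub>G\<^esub> z) * \<omega> (w \<otimes>\<^bsub>G\<^esub> x) y z) \<and>
     (\<forall>x\<in>carrier G. \<forall>y\<in>carrier G. \<forall>z\<in>carrier G.
        (x = \<one>\<^bsub>G\<^esub> \<or> y = \<one>\<^bsub>G\<^esub> \<or> z = \<one>\<^bsub>G\<^esub>) \<longrightarrow> \<omega> x y z = 1)"

definition quasi_abelian_3cocycle ::
  "('g,'a) monoid_scheme \<Rightarrow> ('x,'b) monoid_scheme \<Rightarrow> ('g \<Rightarrow> 'x \<Rightarrow> 'x) \<Rightarrow> ('x \<Rightarrow> 'g)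
   \<Rightarrow> ('x \<Rightarrow> 'x \<Rightarrow> 'x \<Rightarrow> 'k::field) \<Rightarrow> ('g \<Rightarrow> 'g \<Rightarrow> 'x \<Rightarrow> 'k) \<Rightarrow> ('g \<Rightarrow> 'x \<Rightarrow> 'x \<Rightarrow> 'k)
   \<Rightarrow> ('x \<Rightarrow> 'x \<Rightarrow> 'k) \<Rightarrow> bool" where
  "quasi_abelian_3cocycle G X act bd \<omega> \<gamma> \<mu> c \<longleftrightarrow>
    (\<forall>x\<in>carrier X. \<forall>y\<in>carrier X. \<forall>z\<in>carrier X. \<omega> x y z \<noteq> 0) \<and>
    (\<forall>g\<in>carrier G. \<forall>h\<in>carrier G. \<forall>x\<in>carrier X. \<gamma> g h x \<noteq> 0) \<and>
    (\<forall>g\<in>carrier G. \<forall>x\<in>carrier X. \<forall>y\<in>carrier X. \<mu> g x y \<noteq> 0) \<and>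
    (\<forall>x\<in>carrier X. \<forall>y\<in>carrier X. c x y \<noteq> 0) \<and>
    (\<forall>w\<in>carrier X. \<forall>x\<in>carrier X. \<forall>y\<in>carrier X. \<forall>z\<in>carrier X.
        \<omega> x y z * \<omega> w (x \<otimes>\<^bsub>X\<^esub> y) z * \<omega> w x y
        = \<omega> w x (y \<otimes>\<^bsub>X\<^esub> z) * \<omega> (w \<otimes>\<^bsub>X\<^esub> x) y z) \<and>
    (\<forall>g\<in>carrier G. \<forall>h\<in>carrier G. \<forall>k\<in>carrier G. \<forall>x\<in>carrier X.
        \<gamma> h k x * \<gamma> g (h \<otimes>\<^bsub>G\<^esub> k) x = \<gamma> (g \<otimes>\<^bsub>G\<^esub> h) k x * \<gamma> g h (act k x)) \<and>
    (\<forall>g\<in>carrier G. \<forall>x\<in>carrier X. \<forall>y\<in>carrier X. \<forall>z\<in>carrier X.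
        (\<mu> g y z * \<mu> g x (y \<otimes>\<^bsub>X\<^esub> z)) / (\<mu> g (x \<otimes>\<^bsub>X\<^esub> y) z * \<mu> g x y)
        = \<omega> (act g x) (act g y) (act g z) / \<omega> x y z) \<and>
    (\<forall>g\<in>carrier G. \<forall>h\<in>carrier G. \<forall>x\<in>carrier X. \<forall>y\<in>carrier X.
        (\<gamma> g h x * \<gamma> g h y) / \<gamma> g h (x \<otimes>\<^bsub>X\<^esub> y)
        = (\<mu> g (act h x) (act h y) * \<mu> h x y) / \<mu> (g \<otimes>\<^bsub>G\<^esub> h) x y) \<and>
    (\<forall>g\<in>carrier G. \<forall>x\<in>carrier X. \<forall>y\<in>carrier X.
        c (act g x) (act g y) / c x y
        = (\<mu> g (x \<otimes>\<^bsub>X\<^esub> y \<otimes>\<^bsub>X\<^esub> inv\<^bsub>X\<^esub> x) x / \<mu> g x y)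
          * (\<gamma> (g \<otimes>\<^bsub>G\<^esub> bd x \<otimes>\<^bsub>G\<^esub> inv\<^bsub>G\<^esub> g) g y / \<gamma> g (bd x) y)) \<and>
    (\<forall>x\<in>carrier X. \<forall>y\<in>carrier X. \<forall>z\<in>carrier X.
        c (x \<otimes>\<^bsub>X\<^esub> y) z
        = (\<omega> x y z * \<omega> ((x \<otimes>\<^bsub>X\<^esub> y) \<otimes>\<^bsub>X\<^esub> z \<otimes>\<^bsub>X\<^esub> inv\<^bsub>X\<^esub> (x \<otimes>\<^bsub>X\<^esub> y)) x y)
          / (\<omega> x (y \<otimes>\<^bsub>X\<^esub> z \<otimes>\<^bsub>X\<^esub> inv\<^bsub>X\<^esub> y) y * \<gamma> (bd x) (bd y) z)
          * c x (y \<otimes>\<^bsub>X\<^esub> z \<otimes>\<^bsub>X\<^esub> inv\<^bsub>X\<^esub> y) * c y z) \<and>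
    (\<forall>x\<in>carrier X. \<forall>y\<in>carrier X. \<forall>z\<in>carrier X.
        c x (y \<otimes>\<^bsub>X\<^esub> z)
        = \<omega> (x \<otimes>\<^bsub>X\<^esub> y \<otimes>\<^bsub>X\<^esub> inv\<^bsub>X\<^esub> x) x z
          / (\<omega> x y z * \<omega> (x \<otimes>\<^bsub>X\<^esub> y \<otimes>\<^bsub>X\<^esub> inv\<^bsub>X\<^esub> x) (x \<otimes>\<^bsub>X\<^esub> z \<otimes>\<^bsub>X\<^esub> inv\<^bsub>X\<^esub> x) x * \<mu> (bd x) y z)
          * c x y * c x z)"

definition conj_act :: "('g,'a) monoid_scheme \<Rightarrow> 'g \<Rightarrow> 'g \<Rightarrow> 'g" where
  "conj_act G g x = g \<otimes>\<^bsub>G\<^esub> x \<otimes>\<^bsub>G\<^esub> inv\<^bsub>G\<^esub> g"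

definition gamma_of :: "('g,'a) monoid_scheme \<Rightarrow> ('g \<Rightarrow> 'g \<Rightarrow> 'g \<Rightarrow> 'k::field) \<Rightarrow> 'g \<Rightarrow> 'g \<Rightarrow> 'g \<Rightarrow> 'k" where
  "gamma_of G \<omega> g h x =
     \<omega> g h x * \<omega> (g \<otimes>\<^bsub>G\<^esub> h \<otimes>\<^bsub>G\<^esub> x \<otimes>\<^bsub>G\<^esub> inv\<^bsub>G\<^esub> h \<otimes>\<^bsub>G\<^esub> inv\<^bsub>G\<^esub> g) g h
     / \<omega> g (h \<otimes>\<^bsub>G\<^esub> x \<otimes>\<^bsub>G\<^esub> inv\<^bsub>G\<^esub> h) h"

definition mu_of :: "('g,'a) monoid_scheme \<Rightarrow> ('g \<Rightarrow> 'g \<Rightarrow> 'g \<Rightarrow> 'k::field) \<Rightarrow> 'g \<Rightarrow> 'g \<Rightarrow> 'g \<Rightarrow> 'k" where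
  "mu_of G \<omega> g x y =
     \<omega> (g \<otimes>\<^bsub>G\<^esub> x \<otimes>\<^bsub>G\<^esub> inv\<^bsub>G\<^esub> g) g y
     / (\<omega> (g \<otimes>\<^bsub>G\<^esub> x \<otimes>\<^bsub>G\<^esub> inv\<^bsub>G\<^esub> g) (g \<otimes>\<^bsub>G\<^esub> y \<otimes>\<^bsub>G\<^esub> inv\<^bsub>G\<^esub> g) g * \<omega> g x y)"

end

theory Submission
  imports Defs
begin

lemma (in group) cancel1: "x \<in> carrier G \<Longrightarrow> y \<in> carrier G \<Longrightarrow> x \<otimes> (inv x \<otimes> y) = y"
  by (simp flip: m_assoc)
lemma (in group) cancel2: "x \<in> carrier G \<Longrightarrow> y \<in> carrier G \<Longrightarrow> inv x \<otimes> (x \<otimes> y) = y"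
  by (simp flip: m_assoc)

lemmas (in group) gsimps = m_assoc inv_mult_group inv_inv r_inv l_inv l_one r_one cancel1 cancel2 m_closed inv_closed inv_one

lemma (in group) qa_aux:
  fixes \<omega> :: "'a \<Rightarrow> 'a \<Rightarrow> 'a \<Rightarrow> 'k::field"
  assumes nz: "\<And>x y z. x \<in> carrier G \<Longrightarrow> y \<in> carrier G \<Longrightarrow> z \<in> carrier G \<Longrightarrow> \<omega> x y z \<noteq> 0"
    and coc: "\<And>w x y z. w \<in> carrier G \<Longrightarrow> x \<in> carrier G \<Longrightarrow> y \<in> carrier G \<Longrightarrow> z \<in> carrier G \<Longrightarrow>
        \<omega> x y z * \<omega> w (x \<otimes> y) z * \<omega> w x y = \<omega> w x (y \<otimes> z) * \<omega> (w \<otimes> x) y z"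
  shows "quasi_abelian_3cocycle G G (conj_act G) (\<lambda>x. x) \<omega> (gamma_of G \<omega>) (mu_of G \<omega>) (\<lambda>x y. 1)"
proof -
  note nzs[simp] = nz
  have A: "\<forall>g\<in>carrier G. \<forall>h\<in>carrier G. \<forall>x\<in>carrier G. gamma_of G \<omega> g h x \<noteq> 0"
    by (simp add: gamma_of_def gsimps)
  have B: "\<forall>g\<in>carrier G. \<forall>x\<in>carrier G. \<forall>y\<in>carrier G. mu_of G \<omega> g x y \<noteq> 0"
    by (simp add: mu_of_def gsimps)
  have Cb: "\<forall>g\<in>carrier G. \<forall>h\<in>carrier G. \<forall>k\<in>carrier G. \<forall>x\<in>carrier G.
        gamma_of G \<omega> h k x * gamma_of G \<omega> g (h \<otimes> k) x = gamma_of G \<omega> (g \<otimes> h) k x * gamma_of G \<omega> g h (conj_act G k x)"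
  proof (intro ballI)
    fix g h k x assume [simp]: "g \<in> carrier G" "h \<in> carrier G" "k \<in> carrier G" "x \<in> carrier G"
    have b_i0: "\<omega> g h k * \<omega> (g \<otimes> (h \<otimes> (k \<otimes> (x \<otimes> ((inv k) \<otimes> ((inv h) \<otimes> (inv g))))))) (g \<otimes> h) k * \<omega> (g \<otimes> (h \<otimes> (k \<otimes> (x \<otimes> ((inv k) \<otimes> ((inv h) \<otimes> (inv g))))))) g h = \<omega> (g \<otimes> (h \<otimes> (k \<otimes> (x \<otimes> ((inv k) \<otimes> ((inv h) \<otimes> (inv g))))))) g (h \<otimes> k) * \<omega> (g \<otimes> (h \<otimes> (k \<otimes> (x \<otimes> ((inv k) \<otimes> (inv h)))))) h k"
      using coc[of "g \<otimes> (h \<otimes> (k \<otimes> (x \<otimes> ((inv k) \<otimes> ((inv h) \<otimes> (inv g))))))" "g" "h" "k"] by (simp add: gsimps)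
    have b_s0: "\<omega> (g \<otimes> (h \<otimes> (k \<otimes> (x \<otimes> ((inv k) \<otimes> ((inv h) \<otimes> (inv g))))))) (g \<otimes> h) k = (\<omega> (g \<otimes> (h \<otimes> (k \<otimes> (x \<otimes> ((inv k) \<otimes> ((inv h) \<otimes> (inv g))))))) g (h \<otimes> k) * \<omega> (g \<otimes> (h \<otimes> (k \<otimes> (x \<otimes> ((inv k) \<otimes> (inv h)))))) h k) / (\<omega> g h k * \<omega> (g \<otimes> (h \<otimes> (k \<otimes> (x \<otimes> ((inv k) \<otimes> ((inv h) \<otimes> (inv g))))))) g h)"
      using b_i0 by (simp add: field_simps)
    have b_i1: "\<omega> h k x * \<omega> g (h \<otimes> k) x * \<omega> g h k = \<omega> g h (k \<otimes> x) * \<omega> (g \<otimes> h) k x"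
      using coc[of "g" "h" "k" "x"] by (simp add: gsimps)
    have b_s1: "\<omega> h k x = (\<omega> g h (k \<otimes> x) * \<omega> (g \<otimes> h) k x) / (\<omega> g (h \<otimes> k) x * \<omega> g h k)"
      using b_i1 by (simp add: field_simps)
    have b_i2: "\<omega> h (k \<otimes> (x \<otimes> (inv k))) k * \<omega> g (h \<otimes> (k \<otimes> (x \<otimes> (inv k)))) k * \<omega> g h (k \<otimes> (x \<otimes> (inv k))) = \<omega> g h (k \<otimes> x) * \<omega> (g \<otimes> h) (k \<otimes> (x \<otimes> (inv k))) k"
      using coc[of "g" "h" "k \<otimes> (x \<otimes> (inv k))" "k"] by (simp add: gsimps)
    have b_s2: "\<omega> h (k \<otimes> (x \<otimes> (inv k))) k = (\<omega> g h (k \<otimes> x) * \<omega> (g \<otimes> h) (k \<otimes> (x \<otimes> (inv k))) k) / (\<omega> g (h \<otimes> (k \<otimes> (x \<otimes> (inv k)))) k * \<omega> g h (k \<otimes> (x \<otimes> (inv k))))"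
      using b_i2 by (simp add: field_simps)
    have b_i3: "\<omega> (h \<otimes> (k \<otimes> (x \<otimes> ((inv k) \<otimes> (inv h))))) h k * \<omega> g (h \<otimes> (k \<otimes> (x \<otimes> (inv k)))) k * \<omega> g (h \<otimes> (k \<otimes> (x \<otimes> ((inv k) \<otimes> (inv h))))) h = \<omega> g (h \<otimes> (k \<otimes> (x \<otimes> ((inv k) \<otimes> (inv h))))) (h \<otimes> k) * \<omega> (g \<otimes> (h \<otimes> (k \<otimes> (x \<otimes> ((inv k) \<otimes> (inv h)))))) h k"
      using coc[of "g" "h \<otimes> (k \<otimes> (x \<otimes> ((inv k) \<otimes> (inv h))))" "h" "k"] by (simp add: gsimps)
    have b_s3: "\<omega> (h \<otimes> (k \<otimes> (x \<otimes> ((inv k) \<otimes> (inv h))))) h k = (\<omega> g (h \<otimes> (k \<otimes> (x \<otimes> ((inv k) \<otimes> (inv h))))) (h \<otimes> k) * \<omega> (g \<otimes> (h \<otimes> (k \<otimes> (x \<otimes> ((inv k) \<otimes> (inv h)))))) h k) / (\<omega> g (h \<otimes> (k \<otimes> (x \<otimes> (inv k)))) k * \<omega> g (h \<otimes> (k \<otimes> (x \<otimes> ((inv k) \<otimes> (inv h))))) h)"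
      using b_i3 by (simp add: field_simps)
    show "gamma_of G \<omega> h k x * gamma_of G \<omega> g (h \<otimes> k) x = gamma_of G \<omega> (g \<otimes> h) k x * gamma_of G \<omega> g h (conj_act G k x)"
      unfolding gamma_of_def conj_act_def
      by (simp add: gsimps b_s0 b_s1 b_s2 b_s3 field_simps)
  qed
  have Cc: "\<forall>g\<in>carrier G. \<forall>x\<in>carrier G. \<forall>y\<in>carrier G. \<forall>z\<in>carrier G.
        (mu_of G \<omega> g y z * mu_of G \<omega> g x (y \<otimes> z)) / (mu_of G \<omega> g (x \<otimes> y) z * mu_of G \<omega> g x y)
        = \<omega> (conj_act G g x) (conj_act G g y) (conj_act G g z) / \<omega> x y z"
  proof (intro ballI)
    fix g x y z assume [simp]: "g \<in> carrier G" "x \<in> carrier G" "y \<in> carrier G" "z \<in> carrier G"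
    have c_i0: "\<omega> x y z * \<omega> g (x \<otimes> y) z * \<omega> g x y = \<omega> g x (y \<otimes> z) * \<omega> (g \<otimes> x) y z"
      using coc[of "g" "x" "y" "z"] by (simp add: gsimps)
    have c_s0: "\<omega> x y z = (\<omega> g x (y \<otimes> z) * \<omega> (g \<otimes> x) y z) / (\<omega> g (x \<otimes> y) z * \<omega> g x y)"
      using c_i0 by (simp add: field_simps)
    have c_i1: "\<omega> g y z * \<omega> (g \<otimes> (x \<otimes> (inv g))) (g \<otimes> y) z * \<omega> (g \<otimes> (x \<otimes> (inv g))) g y = \<omega> (g \<otimes> (x \<otimes> (inv g))) g (y \<otimes> z) * \<omega> (g \<otimes> x) y z"
      using coc[of "g \<otimes> (x \<otimes> (inv g))" "g" "y" "z"] by (simp add: gsimps)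
    have c_s1: "\<omega> g y z = (\<omega> (g \<otimes> (x \<otimes> (inv g))) g (y \<otimes> z) * \<omega> (g \<otimes> x) y z) / (\<omega> (g \<otimes> (x \<otimes> (inv g))) (g \<otimes> y) z * \<omega> (g \<otimes> (x \<otimes> (inv g))) g y)"
      using c_i1 by (simp add: field_simps)
    have c_i2: "\<omega> (g \<otimes> (y \<otimes> (inv g))) g z * \<omega> (g \<otimes> (x \<otimes> (inv g))) (g \<otimes> y) z * \<omega> (g \<otimes> (x \<otimes> (inv g))) (g \<otimes> (y \<otimes> (inv g))) g = \<omega> (g \<otimes> (x \<otimes> (inv g))) (g \<otimes> (y \<otimes> (inv g))) (g \<otimes> z) * \<omega> (g \<otimes> (x \<otimes> (y \<otimes> (inv g)))) g z"
      using coc[of "g \<otimes> (x \<otimes> (inv g))" "g \<otimes> (y \<otimes> (inv g))" "g" "z"] by (simp add: gsimps)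
    have c_s2: "\<omega> (g \<otimes> (y \<otimes> (inv g))) g z = (\<omega> (g \<otimes> (x \<otimes> (inv g))) (g \<otimes> (y \<otimes> (inv g))) (g \<otimes> z) * \<omega> (g \<otimes> (x \<otimes> (y \<otimes> (inv g)))) g z) / (\<omega> (g \<otimes> (x \<otimes> (inv g))) (g \<otimes> y) z * \<omega> (g \<otimes> (x \<otimes> (inv g))) (g \<otimes> (y \<otimes> (inv g))) g)"
      using c_i2 by (simp add: field_simps)
    have c_i3: "\<omega> (g \<otimes> (y \<otimes> (inv g))) (g \<otimes> (z \<otimes> (inv g))) g * \<omega> (g \<otimes> (x \<otimes> (inv g))) (g \<otimes> (y \<otimes> (z \<otimes> (inv g)))) g * \<omega> (g \<otimes> (x \<otimes> (inv g))) (g \<otimes> (y \<otimes> (inv g))) (g \<otimes> (z \<otimes> (inv g))) = \<omega> (g \<otimes> (x \<otimes> (inv g))) (g \<otimes> (y \<otimes> (inv g))) (g \<otimes> z) * \<omega> (g \<otimes> (x \<otimes> (y \<otimes> (inv g)))) (g \<otimes> (z \<otimes> (inv g))) g"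
      using coc[of "g \<otimes> (x \<otimes> (inv g))" "g \<otimes> (y \<otimes> (inv g))" "g \<otimes> (z \<otimes> (inv g))" "g"] by (simp add: gsimps)
    have c_s3: "\<omega> (g \<otimes> (y \<otimes> (inv g))) (g \<otimes> (z \<otimes> (inv g))) g = (\<omega> (g \<otimes> (x \<otimes> (inv g))) (g \<otimes> (y \<otimes> (inv g))) (g \<otimes> z) * \<omega> (g \<otimes> (x \<otimes> (y \<otimes> (inv g)))) (g \<otimes> (z \<otimes> (inv g))) g) / (\<omega> (g \<otimes> (x \<otimes> (inv g))) (g \<otimes> (y \<otimes> (z \<otimes> (inv g)))) g * \<omega> (g \<otimes> (x \<otimes> (inv g))) (g \<otimes> (y \<otimes> (inv g))) (g \<otimes> (z \<otimes> (inv g))))"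
      using c_i3 by (simp add: field_simps)
    show "(mu_of G \<omega> g y z * mu_of G \<omega> g x (y \<otimes> z)) / (mu_of G \<omega> g (x \<otimes> y) z * mu_of G \<omega> g x y)
        = \<omega> (conj_act G g x) (conj_act G g y) (conj_act G g z) / \<omega> x y z"
      unfolding mu_of_def conj_act_def
      by (simp add: gsimps c_s0 c_s1 c_s2 c_s3 field_simps)
  qed
  have Cd: "\<forall>g\<in>carrier G. \<forall>h\<in>carrier G. \<forall>x\<in>carrier G. \<forall>y\<in>carrier G.
        (gamma_of G \<omega> g h x * gamma_of G \<omega> g h y) / gamma_of G \<omega> g h (x \<otimes> y)
        = (mu_of G \<omega> g (conj_act G h x) (conj_act G h y) * mu_of G \<omega> h x y) / mu_of G \<omega> (g \<otimes> h) x y"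
  proof (intro ballI)
    fix g h x y assume [simp]: "g \<in> carrier G" "h \<in> carrier G" "x \<in> carrier G" "y \<in> carrier G"
    have d_i0: "\<omega> g (h \<otimes> (y \<otimes> (inv h))) h * \<omega> (g \<otimes> (h \<otimes> (x \<otimes> ((inv h) \<otimes> (inv g))))) (g \<otimes> (h \<otimes> (y \<otimes> (inv h)))) h * \<omega> (g \<otimes> (h \<otimes> (x \<otimes> ((inv h) \<otimes> (inv g))))) g (h \<otimes> (y \<otimes> (inv h))) = \<omega> (g \<otimes> (h \<otimes> (x \<otimes> ((inv h) \<otimes> (inv g))))) g (h \<otimes> y) * \<omega> (g \<otimes> (h \<otimes> (x \<otimes> (inv h)))) (h \<otimes> (y \<otimes> (inv h))) h"
      using coc[of "g \<otimes> (h \<otimes> (x \<otimes> ((inv h) \<otimes> (inv g))))" "g" "h \<otimes> (y \<otimes> (inv h))" "h"] by (simp add: gsimps)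
    have d_s0: "\<omega> g (h \<otimes> (y \<otimes> (inv h))) h = (\<omega> (g \<otimes> (h \<otimes> (x \<otimes> ((inv h) \<otimes> (inv g))))) g (h \<otimes> y) * \<omega> (g \<otimes> (h \<otimes> (x \<otimes> (inv h)))) (h \<otimes> (y \<otimes> (inv h))) h) / (\<omega> (g \<otimes> (h \<otimes> (x \<otimes> ((inv h) \<otimes> (inv g))))) (g \<otimes> (h \<otimes> (y \<otimes> (inv h)))) h * \<omega> (g \<otimes> (h \<otimes> (x \<otimes> ((inv h) \<otimes> (inv g))))) g (h \<otimes> (y \<otimes> (inv h))))"
      using d_i0 by (simp add: field_simps)
    have d_i1: "\<omega> g h y * \<omega> (g \<otimes> (h \<otimes> (x \<otimes> ((inv h) \<otimes> (inv g))))) (g \<otimes> h) y * \<omega> (g \<otimes> (h \<otimes> (x \<otimes> ((inv h) \<otimes> (inv g))))) g h = \<omega> (g \<otimes> (h \<otimes> (x \<otimes> ((inv h) \<otimes> (inv g))))) g (h \<otimes> y) * \<omega> (g \<otimes> (h \<otimes> (x \<otimes> (inv h)))) h y"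
      using coc[of "g \<otimes> (h \<otimes> (x \<otimes> ((inv h) \<otimes> (inv g))))" "g" "h" "y"] by (simp add: gsimps)
    have d_s1: "\<omega> g h y = (\<omega> (g \<otimes> (h \<otimes> (x \<otimes> ((inv h) \<otimes> (inv g))))) g (h \<otimes> y) * \<omega> (g \<otimes> (h \<otimes> (x \<otimes> (inv h)))) h y) / (\<omega> (g \<otimes> (h \<otimes> (x \<otimes> ((inv h) \<otimes> (inv g))))) (g \<otimes> h) y * \<omega> (g \<otimes> (h \<otimes> (x \<otimes> ((inv h) \<otimes> (inv g))))) g h)"
      using d_i1 by (simp add: field_simps)
    have d_i2: "\<omega> h x y * \<omega> g (h \<otimes> x) y * \<omega> g h x = \<omega> g h (x \<otimes> y) * \<omega> (g \<otimes> h) x y"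
      using coc[of "g" "h" "x" "y"] by (simp add: gsimps)
    have d_s2: "\<omega> h x y = (\<omega> g h (x \<otimes> y) * \<omega> (g \<otimes> h) x y) / (\<omega> g (h \<otimes> x) y * \<omega> g h x)"
      using d_i2 by (simp add: field_simps)
    have d_i3: "\<omega> (h \<otimes> (x \<otimes> (inv h))) h y * \<omega> g (h \<otimes> x) y * \<omega> g (h \<otimes> (x \<otimes> (inv h))) h = \<omega> g (h \<otimes> (x \<otimes> (inv h))) (h \<otimes> y) * \<omega> (g \<otimes> (h \<otimes> (x \<otimes> (inv h)))) h y"
      using coc[of "g" "h \<otimes> (x \<otimes> (inv h))" "h" "y"] by (simp add: gsimps)
    have d_s3: "\<omega> (h \<otimes> (x \<otimes> (inv h))) h y = (\<omega> g (h \<otimes> (x \<otimes> (inv h))) (h \<otimes> y) * \<omega> (g \<otimes> (h \<otimes> (x \<otimes> (inv h)))) h y) / (\<omega> g (h \<otimes> x) y * \<omega> g (h \<otimes> (x \<otimes> (inv h))) h)"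
      using d_i3 by (simp add: field_simps)
    have d_i4: "\<omega> (h \<otimes> (x \<otimes> (inv h))) (h \<otimes> (y \<otimes> (inv h))) h * \<omega> g (h \<otimes> (x \<otimes> (y \<otimes> (inv h)))) h * \<omega> g (h \<otimes> (x \<otimes> (inv h))) (h \<otimes> (y \<otimes> (inv h))) = \<omega> g (h \<otimes> (x \<otimes> (inv h))) (h \<otimes> y) * \<omega> (g \<otimes> (h \<otimes> (x \<otimes> (inv h)))) (h \<otimes> (y \<otimes> (inv h))) h"
      using coc[of "g" "h \<otimes> (x \<otimes> (inv h))" "h \<otimes> (y \<otimes> (inv h))" "h"] by (simp add: gsimps)
    have d_s4: "\<omega> (h \<otimes> (x \<otimes> (inv h))) (h \<otimes> (y \<otimes> (inv h))) h = (\<omega> g (h \<otimes> (x \<otimes> (inv h))) (h \<otimes> y) * \<omega> (g \<otimes> (h \<otimes> (x \<otimes> (inv h)))) (h \<otimes> (y \<otimes> (inv h))) h) / (\<omega> g (h \<otimes> (x \<otimes> (y \<otimes> (inv h)))) h * \<omega> g (h \<otimes> (x \<otimes> (inv h))) (h \<otimes> (y \<otimes> (inv h))))"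
      using d_i4 by (simp add: field_simps)
    have d_i5: "\<omega> (g \<otimes> (h \<otimes> (y \<otimes> ((inv h) \<otimes> (inv g))))) g h * \<omega> (g \<otimes> (h \<otimes> (x \<otimes> ((inv h) \<otimes> (inv g))))) (g \<otimes> (h \<otimes> (y \<otimes> (inv h)))) h * \<omega> (g \<otimes> (h \<otimes> (x \<otimes> ((inv h) \<otimes> (inv g))))) (g \<otimes> (h \<otimes> (y \<otimes> ((inv h) \<otimes> (inv g))))) g = \<omega> (g \<otimes> (h \<otimes> (x \<otimes> ((inv h) \<otimes> (inv g))))) (g \<otimes> (h \<otimes> (y \<otimes> ((inv h) \<otimes> (inv g))))) (g \<otimes> h) * \<omega> (g \<otimes> (h \<otimes> (x \<otimes> (y \<otimes> ((inv h) \<otimes> (inv g)))))) g h"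
      using coc[of "g \<otimes> (h \<otimes> (x \<otimes> ((inv h) \<otimes> (inv g))))" "g \<otimes> (h \<otimes> (y \<otimes> ((inv h) \<otimes> (inv g))))" "g" "h"] by (simp add: gsimps)
    have d_s5: "\<omega> (g \<otimes> (h \<otimes> (y \<otimes> ((inv h) \<otimes> (inv g))))) g h = (\<omega> (g \<otimes> (h \<otimes> (x \<otimes> ((inv h) \<otimes> (inv g))))) (g \<otimes> (h \<otimes> (y \<otimes> ((inv h) \<otimes> (inv g))))) (g \<otimes> h) * \<omega> (g \<otimes> (h \<otimes> (x \<otimes> (y \<otimes> ((inv h) \<otimes> (inv g)))))) g h) / (\<omega> (g \<otimes> (h \<otimes> (x \<otimes> ((inv h) \<otimes> (inv g))))) (g \<otimes> (h \<otimes> (y \<otimes> (inv h)))) h * \<omega> (g \<otimes> (h \<otimes> (x \<otimes> ((inv h) \<otimes> (inv g))))) (g \<otimes> (h \<otimes> (y \<otimes> ((inv h) \<otimes> (inv g))))) g)"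
      using d_i5 by (simp add: field_simps)

    show "(gamma_of G \<omega> g h x * gamma_of G \<omega> g h y) / gamma_of G \<omega> g h (x \<otimes> y)
        = (mu_of G \<omega> g (conj_act G h x) (conj_act G h y) * mu_of G \<omega> h x y) / mu_of G \<omega> (g \<otimes> h) x y"
      unfolding gamma_of_def mu_of_def conj_act_def
      by (simp add: gsimps d_s0 d_s1 d_s2 d_s3 d_s4 d_s5 field_simps)
  qed
  have Ce: "\<forall>g\<in>carrier G. \<forall>x\<in>carrier G. \<forall>y\<in>carrier G.
        (\<lambda>x y. 1::'k) (conj_act G g x) (conj_act G g y) / (\<lambda>x y. 1) x y
        = (mu_of G \<omega> g (x \<otimes> y \<otimes> inv x) x / mu_of G \<omega> g x y)
          * (gamma_of G \<omega> (g \<otimes> x \<otimes> inv g) g y / gamma_of G \<omega> g x y)"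
    by (simp add: gamma_of_def mu_of_def conj_act_def gsimps field_simps)
  have Cf: "\<forall>x\<in>carrier G. \<forall>y\<in>carrier G. \<forall>z\<in>carrier G.
        (\<lambda>x y. 1::'k) (x \<otimes> y) z
        = (\<omega> x y z * \<omega> ((x \<otimes> y) \<otimes> z \<otimes> inv (x \<otimes> y)) x y)
          / (\<omega> x (y \<otimes> z \<otimes> inv y) y * gamma_of G \<omega> x y z)
          * (\<lambda>x y. 1) x (y \<otimes> z \<otimes> inv y) * (\<lambda>x y. 1) y z"
    by (simp add: gamma_of_def gsimps field_simps)
  have Cg: "\<forall>x\<in>carrier G. \<forall>y\<in>carrier G. \<forall>z\<in>carrier G.
        (\<lambda>x y. 1::'k) x (y \<otimes> z)
        = \<omega> (x \<otimes> y \<otimes> inv x) x z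
          / (\<omega> x y z * \<omega> (x \<otimes> y \<otimes> inv x) (x \<otimes> z \<otimes> inv x) x * mu_of G \<omega> x y z)
          * (\<lambda>x y. 1) x y * (\<lambda>x y. 1) x z"
    by (simp add: mu_of_def gsimps field_simps)
  have Ca: "\<forall>w\<in>carrier G. \<forall>x\<in>carrier G. \<forall>y\<in>carrier G. \<forall>z\<in>carrier G.
        \<omega> x y z * \<omega> w (x \<otimes> y) z * \<omega> w x y = \<omega> w x (y \<otimes> z) * \<omega> (w \<otimes> x) y z"
    using coc by blast
  show ?thesis
    unfolding quasi_abelian_3cocycle_def
    using A B Ca Cb Cc Cd Ce Cf Cg nz by simp
qed

theorem lemma6p3:
  fixes G :: "('g, 'a) monoid_scheme"
    and \<omega> :: "'g \<Rightarrow> 'g \<Rightarrow> 'g \<Rightarrow> 'k::field_char_0"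
  assumes "alg_closed TYPE('k)"
    and "group G"
    and "finite (carrier G)"
    and "normalized_3cocycle G \<omega>"
  shows "quasi_abelian_3cocycle G G (conj_act G) (\<lambda>x. x) \<omega> (gamma_of G \<omega>) (mu_of G \<omega>) (\<lambda>x y. 1)"
proof -
  interpret group G by fact
  show ?thesis
    apply (rule qa_aux)
    using assms(4) unfolding normalized_3cocycle_def by blast+
qed

end
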